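(* Let $(G,\tau,\partial)$ be a Polish topometric group with the Steinhaus property, and let $H$ be a second countable topological group. If $\varphi\colon(G,\partial)\to H$ is a continuous group homomorphism, then $\varphi\colon(G,\tau)\to H$ is continuous.
   Context: A Polish topometric group is a triple $(G,\tau,\partial)$ with $(G,\tau)$ a Polish group, $\partial$ a bi-invariant metric whose topology refines $\tau$ and which is $\tau$-lower semi-continuous. For $A\subseteq G$, $(A)_\varepsilon=\{g\colon\partial(g,A)<\varepsilon\}$. A subset $A$ of $G$ is $\sigma$-syndetic if $G$ is covered by countably many left translates of $A$. The topometric group $G$ has the Steinhaus property if there is an integer $k$ such that for every symmetric $\sigma$-syndetic $A\subseteq G$ and every $\varepsilon>0$, $1_G\in\mathrm{Int}_\tau\big((A^k)_\varepsilon\big)$. *)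

theory Defs
  imports "HOL-Analysis.Analysis" "HOL-Algebra.Coset"
begin

definition Polish_space :: "'a topology \<Rightarrow> bool" where
  "Polish_space X \<longleftrightarrow> completely_metrizable_space X \<and> separable_space X"

definition topological_group :: "('a, 'b) monoid_scheme \<Rightarrow> 'a topology \<Rightarrow> bool" where
  "topological_group G X \<longleftrightarrow> group G \<and> topspace X = carrier G \<and>
     continuous_map (prod_topology X X) X (\<lambda>p. fst p \<otimes>\<^bsub>G\<^esub> snd p) \<and>
     continuous_map X X (\<lambda>x. inv\<^bsub>G\<^esub> x)"

definition Polish_group :: "('a, 'b) monoid_scheme \<Rightarrow> 'a topology \<Rightarrow> bool" where
  "Polish_group G X \<longleftrightarrow> topological_group G X \<and> Polish_space X"

definition Polish_topometric_group ::
  "('a, 'b) monoid_scheme \<Rightarrow> 'a topology \<Rightarrow> ('a \<Rightarrow> 'a \<Rightarrow> real) \<Rightarrow> bool" where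
  "Polish_topometric_group G X d \<longleftrightarrow> Polish_group G X \<and>
     Metric_space (carrier G) d \<and>
     (\<forall>g\<in>carrier G. \<forall>x\<in>carrier G. \<forall>y\<in>carrier G.
        d (g \<otimes>\<^bsub>G\<^esub> x) (g \<otimes>\<^bsub>G\<^esub> y) = d x y \<and> d (x \<otimes>\<^bsub>G\<^esub> g) (y \<otimes>\<^bsub>G\<^esub> g) = d x y) \<and>
     (\<forall>U. openin X U \<longrightarrow> openin (Metric_space.mtopology (carrier G) d) U) \<and>
     (\<forall>r. openin (prod_topology X X)
            {p \<in> topspace (prod_topology X X). r < d (fst p) (snd p)})"

fun set_pow :: "('a, 'b) monoid_scheme \<Rightarrow> 'a set \<Rightarrow> nat \<Rightarrow> 'a set" where
  "set_pow G A 0 = {\<one>\<^bsub>G\<^esub>}"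
| "set_pow G A (Suc n) = set_pow G A n <#>\<^bsub>G\<^esub> A"

text \<open>(A)_eps = {g. d(g,A) < eps}; d(g,A) = inf over a in A of d g a, which is < eps iff some
  a in A has d g a < eps.\<close>
definition metric_nbhd :: "('a, 'b) monoid_scheme \<Rightarrow> ('a \<Rightarrow> 'a \<Rightarrow> real) \<Rightarrow> 'a set \<Rightarrow> real \<Rightarrow> 'a set" where
  "metric_nbhd G d A \<epsilon> = {g \<in> carrier G. \<exists>a\<in>A. d g a < \<epsilon>}"

definition sigma_syndetic :: "('a, 'b) monoid_scheme \<Rightarrow> 'a set \<Rightarrow> bool" where
  "sigma_syndetic G A \<longleftrightarrow>
     (\<exists>S. countable S \<and> S \<subseteq> carrier G \<and> carrier G \<subseteq> (\<Union>g\<in>S. g <#\<^bsub>G\<^esub> A))"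

definition Steinhaus_property ::
  "('a, 'b) monoid_scheme \<Rightarrow> 'a topology \<Rightarrow> ('a \<Rightarrow> 'a \<Rightarrow> real) \<Rightarrow> bool" where
  "Steinhaus_property G X d \<longleftrightarrow>
     (\<exists>k::nat. \<forall>A. A \<subseteq> carrier G \<longrightarrow> set_inv\<^bsub>G\<^esub> A = A \<longrightarrow> sigma_syndetic G A \<longrightarrow>
        (\<forall>\<epsilon>>0. \<one>\<^bsub>G\<^esub> \<in> X interior_of (metric_nbhd G d (set_pow G A k) \<epsilon>)))"

end

theory Submission
  imports Defs
begin

lemma tg_lmult:
  assumes "topological_group G X" "c \<in> carrier G"
  shows "continuous_map X X (\<lambda>y. c \<otimes>\<^bsub>G\<^esub> y)"
proof -
  have m: "continuous_map (prod_topology X X) X (\<lambda>p. fst p \<otimes>\<^bsub>G\<^esub> snd p)"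
    and t: "topspace X = carrier G" using assms unfolding topological_group_def by auto
  have "continuous_map X (prod_topology X X) (\<lambda>y. (c, y))"
    using assms(2) t by (intro continuous_map_pairedI) auto
  from continuous_map_compose[OF this m] show ?thesis by (simp add: o_def)
qed

lemma set_pow_mono: "A \<subseteq> B \<Longrightarrow> set_pow G A n \<subseteq> set_pow G B n"
  by (induction n) (auto simp: set_mult_def)

lemma set_pow_carrier: "A \<subseteq> carrier G \<Longrightarrow> group G \<Longrightarrow> set_pow G A n \<subseteq> carrier G"
proof (induction n)
  case 0 then show ?case by (simp add: group.is_monoid monoid.one_closed)
next
  case (Suc n)
  then show ?case unfolding set_pow.simps set_mult_def
    using monoid.m_closed[OF group.is_monoid[OF Suc.prems(2)]] Suc.prems(1) by blast
qed

lemma set_pow_hom: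
  assumes "group_hom G H f" "A \<subseteq> carrier G"
  shows "f ` set_pow G A n \<subseteq> set_pow H (f ` A) n"
proof (induction n)
  case 0 then show ?case using assms(1) by (simp add: group_hom.hom_one)
next
  case (Suc n)
  have c: "set_pow G A n \<subseteq> carrier G"
    using set_pow_carrier assms group_hom.axioms(1) by blast
  show ?case
  proof
    fix y assume "y \<in> f ` set_pow G A (Suc n)"
    then obtain a b where ab: "a \<in> set_pow G A n" "b \<in> A" "y = f (a \<otimes>\<^bsub>G\<^esub> b)"
      unfolding set_pow.simps set_mult_def by blast
    have ac: "a \<in> carrier G" "b \<in> carrier G" using ab c assms(2) by auto
    have "y = f a \<otimes>\<^bsub>H\<^esub> f b" using ab(3) group_hom.hom_mult[OF assms(1) ac] by simp
    moreover have "f a \<in> set_pow H (f ` A) n" using Suc ab(1) by blast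
    moreover have "f b \<in> f ` A" using ab(2) by blast
    ultimately show "y \<in> set_pow H (f ` A) (Suc n)" unfolding set_pow.simps set_mult_def by blast
  qed
qed

lemma small_pow:
  assumes "topological_group H Y"
  shows "openin Y W \<Longrightarrow> \<one>\<^bsub>H\<^esub> \<in> W \<Longrightarrow> \<exists>V. openin Y V \<and> \<one>\<^bsub>H\<^esub> \<in> V \<and> set_pow H V n \<subseteq> W"
proof (induction n arbitrary: W)
  case 0
  have "\<one>\<^bsub>H\<^esub> \<in> topspace Y" using 0 openin_subset by blast
  then show ?case using 0 by (intro exI[of _ "topspace Y"]) auto
next
  case (Suc n)
  have m: "continuous_map (prod_topology Y Y) Y (\<lambda>p. fst p \<otimes>\<^bsub>H\<^esub> snd p)"
    and t: "topspace Y = carrier H" and g: "group H"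
    using assms unfolding topological_group_def by auto
  let ?P = "{p \<in> topspace (prod_topology Y Y). fst p \<otimes>\<^bsub>H\<^esub> snd p \<in> W}"
  have "openin (prod_topology Y Y) ?P" using m Suc.prems(1) openin_continuous_map_preimage by blast
  moreover have "(\<one>\<^bsub>H\<^esub>, \<one>\<^bsub>H\<^esub>) \<in> ?P" using Suc.prems t g by (simp add: group.is_monoid)
  ultimately obtain V1 V2 where V: "openin Y V1" "openin Y V2" "\<one>\<^bsub>H\<^esub> \<in> V1" "\<one>\<^bsub>H\<^esub> \<in> V2" "V1 \<times> V2 \<subseteq> ?P"
    using openin_prod_topology_alt[of Y Y ?P] by meson
  obtain V3 where V3: "openin Y V3" "\<one>\<^bsub>H\<^esub> \<in> V3" "set_pow H V3 n \<subseteq> V1"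
    using Suc.IH[OF V(1,3)] by blast
  let ?V = "V3 \<inter> V2"
  have "set_pow H ?V (Suc n) \<subseteq> W"
  proof
    fix y assume "y \<in> set_pow H ?V (Suc n)"
    then obtain a b where ab: "a \<in> set_pow H ?V n" "b \<in> ?V" "y = a \<otimes>\<^bsub>H\<^esub> b"
      unfolding set_pow.simps set_mult_def by blast
    moreover have "set_pow H ?V n \<subseteq> V1" using V3 set_pow_mono[of ?V V3] by blast
    ultimately have "(a, b) \<in> V1 \<times> V2" by blast
    then have "(a, b) \<in> ?P" using V(5) by blast
    then show "y \<in> W" using ab(3) by simp
  qed
  then show ?case using V V3 by (intro exI[of _ ?V]) auto
qed

theorem proposition4p3:
  fixes G :: "('a, 'b) monoid_scheme" and X :: "'a topology" and d :: "'a \<Rightarrow> 'a \<Rightarrow> real"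
    and H :: "('c, 'e) monoid_scheme" and Y :: "'c topology" and \<phi> :: "'a \<Rightarrow> 'c"
  assumes "Polish_topometric_group G X d"
    and "Steinhaus_property G X d"
    and "topological_group H Y"
    and "second_countable Y"
    and "\<phi> \<in> hom G H"
    and "continuous_map (Metric_space.mtopology (carrier G) d) Y \<phi>"
  shows "continuous_map X Y \<phi>"
proof -
  have tgG: "topological_group G X"
    using assms(1) unfolding Polish_topometric_group_def Polish_group_def by blast
  have MS: "Metric_space (carrier G) d"
    using assms(1) unfolding Polish_topometric_group_def by blast
  have inv0: "\<forall>g\<in>carrier G. \<forall>x\<in>carrier G. \<forall>y\<in>carrier G.
        d (g \<otimes>\<^bsub>G\<^esub> x) (g \<otimes>\<^bsub>G\<^esub> y) = d x y \<and> d (x \<otimes>\<^bsub>G\<^esub> g) (y \<otimes>\<^bsub>G\<^esub> g) = d x y"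
    using assms(1) unfolding Polish_topometric_group_def by (elim conjE)
  have inv: "d (g \<otimes>\<^bsub>G\<^esub> x) (g \<otimes>\<^bsub>G\<^esub> y) = d x y"
    if "g\<in>carrier G" "x\<in>carrier G" "y\<in>carrier G" for g x y
    using conjunct1[OF inv0[rule_format, OF that]] .
  have gG: "group G" and tX: "topspace X = carrier G" using tgG unfolding topological_group_def by blast+
  have gH: "group H" and tY: "topspace Y = carrier H"
    and invc: "continuous_map Y Y (\<lambda>x. inv\<^bsub>H\<^esub> x)"
    using assms(3) unfolding topological_group_def by blast+
  interpret G: group G by (rule gG)
  interpret H: group H by (rule gH)
  interpret f: group_hom G H \<phi> using assms(5) gG gH by (simp add: group_hom_def group_hom_axioms_def)
  interpret M: Metric_space "carrier G" d by (rule MS)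
  obtain k where k0: "\<forall>A. A \<subseteq> carrier G \<longrightarrow> set_inv\<^bsub>G\<^esub> A = A \<longrightarrow> sigma_syndetic G A \<longrightarrow>
        (\<forall>\<epsilon>>0. \<one>\<^bsub>G\<^esub> \<in> X interior_of (metric_nbhd G d (set_pow G A k) \<epsilon>))"
    using assms(2) unfolding Steinhaus_property_def by (elim exE) (erule that)
  have phiG: "\<And>g. g \<in> carrier G \<Longrightarrow> \<phi> g \<in> carrier H" by simp
  have at1: "\<exists>U. openin X U \<and> \<one>\<^bsub>G\<^esub> \<in> U \<and> \<phi> ` U \<subseteq> W" if W: "openin Y W" "\<one>\<^bsub>H\<^esub> \<in> W" for W
  proof -
    obtain V where V: "openin Y V" "\<one>\<^bsub>H\<^esub> \<in> V" "set_pow H V (Suc k) \<subseteq> W"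
      using small_pow[OF assms(3) W] by blast
    define V' where "V' = {y \<in> topspace Y. y \<in> V \<and> inv\<^bsub>H\<^esub> y \<in> V}"
    have V'o: "openin Y V'"
    proof -
      have "openin Y {y \<in> topspace Y. inv\<^bsub>H\<^esub> y \<in> V}"
        using invc V(1) openin_continuous_map_preimage by blast
      then have "openin Y (V \<inter> {y \<in> topspace Y. inv\<^bsub>H\<^esub> y \<in> V})" using V(1) by blast
      moreover have "V \<inter> {y \<in> topspace Y. inv\<^bsub>H\<^esub> y \<in> V} = V'" unfolding V'_def by auto
      ultimately show ?thesis by simp
    qed
    have V'1: "\<one>\<^bsub>H\<^esub> \<in> V'" using V tY unfolding V'_def by auto
    have V'V: "V' \<subseteq> V" unfolding V'_def by auto
    define A where "A = {g \<in> carrier G. \<phi> g \<in> V'}"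
    have Ac: "A \<subseteq> carrier G" unfolding A_def by auto
    have Ainv: "set_inv\<^bsub>G\<^esub> A = A"
    proof -
      have "inv\<^bsub>G\<^esub> g \<in> A" if "g \<in> A" for g
        using that tY by (auto simp: A_def V'_def f.hom_inv)
      moreover have "g \<in> A \<Longrightarrow> g = inv\<^bsub>G\<^esub> (inv\<^bsub>G\<^esub> g)" for g using Ac by auto
      ultimately show ?thesis unfolding SET_INV_def using Ac by blast
    qed
    have Asynd: "sigma_syndetic G A"
    proof -
      let ?S = "\<phi> ` carrier G"
      let ?Z = "subtopology Y ?S"
      define Og where "Og g = {y \<in> topspace Y. inv\<^bsub>H\<^esub> (\<phi> g) \<otimes>\<^bsub>H\<^esub> y \<in> V'}" for g
      have Oo: "openin Y (Og g)" if "g \<in> carrier G" for g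
      proof -
        have "inv\<^bsub>H\<^esub> (\<phi> g) \<in> carrier H" using that by simp
        then have "continuous_map Y Y (\<lambda>y. inv\<^bsub>H\<^esub> (\<phi> g) \<otimes>\<^bsub>H\<^esub> y)" by (rule tg_lmult[OF assms(3)])
        then show ?thesis unfolding Og_def by (rule openin_continuous_map_preimage[OF _ V'o])
      qed
      have Oin: "\<phi> g \<in> Og g" if "g \<in> carrier G" for g
      proof -
        have a: "\<phi> g \<in> carrier H" using that by (rule f.hom_closed)
        have b: "inv\<^bsub>H\<^esub> (\<phi> g) \<otimes>\<^bsub>H\<^esub> \<phi> g = \<one>\<^bsub>H\<^esub>" by (rule H.l_inv[OF a])
        show ?thesis unfolding Og_def mem_Collect_eq tY b using a V'1 by (rule conjI)
      qed
      have tZ: "topspace ?Z = ?S" unfolding topspace_subtopology tY using f.hom_closed by blast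
      have "Lindelof_space ?Z"
        by (rule second_countable_imp_Lindelof_space[OF second_countable_subtopology[OF assms(4)]])
      then have L: "\<forall>\<U>. (\<forall>U \<in> \<U>. openin ?Z U) \<and> \<Union>\<U> = topspace ?Z
            \<longrightarrow> (\<exists>\<V>. countable \<V> \<and> \<V> \<subseteq> \<U> \<and> \<Union>\<V> = topspace ?Z)"
        unfolding Lindelof_space_def .
      define U where "U = (\<lambda>g. Og g \<inter> ?S) ` carrier G"
      have U1: "\<forall>u\<in>U. openin ?Z u" unfolding U_def by (auto intro!: openin_subtopology_Int Oo)
      have U2: "\<Union>U = topspace ?Z"
      proof
        show "\<Union>U \<subseteq> topspace ?Z"
        proof (rule Union_least)
          fix u assume "u \<in> U" then show "u \<subseteq> topspace ?Z" unfolding U_def tZ by (auto simp del: Int_iff)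
        qed
        show "topspace ?Z \<subseteq> \<Union>U"
        proof
          fix y assume "y \<in> topspace ?Z"
          then obtain g where g: "g \<in> carrier G" "y = \<phi> g" using tZ by auto
          then have "y \<in> Og g \<inter> ?S" using Oin by blast
          moreover have "Og g \<inter> ?S \<in> U" unfolding U_def using g(1) by (rule imageI)
          ultimately show "y \<in> \<Union>U" by (rule UnionI[rotated])
        qed
      qed
      obtain \<V> where Vc: "countable \<V>" "\<V> \<subseteq> U" "\<Union>\<V> = topspace ?Z"
        using L[rule_format, OF conjI[OF U1 U2]] by (elim exE conjE) (rule that, assumption+)
      define c where "c v = (SOME g. g \<in> carrier G \<and> v = Og g \<inter> ?S)" for v
      have cp: "c v \<in> carrier G \<and> v = Og (c v) \<inter> ?S" if "v \<in> \<V>" for v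
      proof -
        have "v \<in> U" using that Vc(2) by (rule subsetD[rotated])
        then obtain g where "g \<in> carrier G" "v = Og g \<inter> ?S" unfolding U_def by (rule imageE)
        then have "\<exists>g. g \<in> carrier G \<and> v = Og g \<inter> ?S" by blast
        then show ?thesis unfolding c_def by (rule someI_ex)
      qed
      show ?thesis unfolding sigma_syndetic_def
      proof (intro exI[of _ "c ` \<V>"] conjI)
        show "countable (c ` \<V>)" using Vc(1) by (rule countable_image)
        show "c ` \<V> \<subseteq> carrier G"
        proof (rule image_subsetI)
          fix v assume "v \<in> \<V>"
          then show "c v \<in> carrier G" by (rule conjunct1[OF cp])
        qed
        show "carrier G \<subseteq> (\<Union>g\<in>c ` \<V>. g <#\<^bsub>G\<^esub> A)"
        proof
          fix g assume g: "g \<in> carrier G"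
          have "\<phi> g \<in> \<Union>\<V>" unfolding Vc(3) tZ using g by (rule imageI)
          then obtain v where v: "\<phi> g \<in> v" "v \<in> \<V>" by (rule UnionE)
          let ?h = "c v"
          have h1: "?h \<in> carrier G" using conjunct1[OF cp[OF v(2)]] .
          have h2: "\<phi> g \<in> Og ?h" using v(1) conjunct2[OF cp[OF v(2)]] by blast
          have eq: "inv\<^bsub>H\<^esub> (\<phi> ?h) \<otimes>\<^bsub>H\<^esub> \<phi> g = \<phi> (inv\<^bsub>G\<^esub> ?h \<otimes>\<^bsub>G\<^esub> g)"
            by (simp only: f.hom_mult[OF G.inv_closed[OF h1] g] f.hom_inv[OF h1])
          have "inv\<^bsub>H\<^esub> (\<phi> ?h) \<otimes>\<^bsub>H\<^esub> \<phi> g \<in> V'" using h2 unfolding Og_def by blast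
          then have inV: "\<phi> (inv\<^bsub>G\<^esub> ?h \<otimes>\<^bsub>G\<^esub> g) \<in> V'" unfolding eq .
          have inA: "inv\<^bsub>G\<^esub> ?h \<otimes>\<^bsub>G\<^esub> g \<in> A" unfolding A_def mem_Collect_eq
            using G.m_closed[OF G.inv_closed[OF h1] g] inV by (rule conjI)
          have ge: "?h \<otimes>\<^bsub>G\<^esub> (inv\<^bsub>G\<^esub> ?h \<otimes>\<^bsub>G\<^esub> g) = g"
            by (simp only: G.m_assoc[symmetric, OF h1 G.inv_closed[OF h1] g] G.r_inv[OF h1] G.l_one[OF g])
          have "?h \<otimes>\<^bsub>G\<^esub> (inv\<^bsub>G\<^esub> ?h \<otimes>\<^bsub>G\<^esub> g) \<in> ?h <#\<^bsub>G\<^esub> A"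
            unfolding l_coset_def using inA by blast
          then have "g \<in> ?h <#\<^bsub>G\<^esub> A" unfolding ge .
          then show "g \<in> (\<Union>g\<in>c ` \<V>. g <#\<^bsub>G\<^esub> A)" by (rule UN_I[OF imageI[OF v(2)]])
        qed
      qed
    qed
    have "openin M.mtopology {x \<in> topspace M.mtopology. \<phi> x \<in> V'}"
      using assms(6) V'o openin_continuous_map_preimage by blast
    moreover have "\<one>\<^bsub>G\<^esub> \<in> {x \<in> topspace M.mtopology. \<phi> x \<in> V'}" using V'1 by simp
    ultimately obtain \<epsilon> where e: "\<epsilon> > 0" "M.mball \<one>\<^bsub>G\<^esub> \<epsilon> \<subseteq> {x \<in> topspace M.mtopology. \<phi> x \<in> V'}"
      unfolding M.openin_mtopology by blast
    have int: "\<one>\<^bsub>G\<^esub> \<in> X interior_of (metric_nbhd G d (set_pow G A k) \<epsilon>)"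
      using k0[rule_format, OF Ac Ainv Asynd e(1)] .
    have img: "\<phi> ` metric_nbhd G d (set_pow G A k) \<epsilon> \<subseteq> W"
    proof
      fix y assume "y \<in> \<phi> ` metric_nbhd G d (set_pow G A k) \<epsilon>"
      then obtain g a where ga: "g \<in> carrier G" "a \<in> set_pow G A k" "d g a < \<epsilon>" "y = \<phi> g"
        unfolding metric_nbhd_def by blast
      have ac: "a \<in> carrier G" using set_pow_carrier[OF Ac gG] ga(2) by blast
      have "d \<one>\<^bsub>G\<^esub> (inv\<^bsub>G\<^esub> a \<otimes>\<^bsub>G\<^esub> g) = d (inv\<^bsub>G\<^esub> a \<otimes>\<^bsub>G\<^esub> a) (inv\<^bsub>G\<^esub> a \<otimes>\<^bsub>G\<^esub> g)"
        using ac by simp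
      also have "\<dots> = d a g" by (rule inv[OF G.inv_closed[OF ac] ac ga(1)])
      also have "\<dots> = d g a" using M.commute by simp
      finally have "inv\<^bsub>G\<^esub> a \<otimes>\<^bsub>G\<^esub> g \<in> M.mball \<one>\<^bsub>G\<^esub> \<epsilon>" using ga ac by simp
      then have b: "\<phi> (inv\<^bsub>G\<^esub> a \<otimes>\<^bsub>G\<^esub> g) \<in> V" using e(2) V'V by auto
      have "\<phi> a \<in> set_pow H (\<phi> ` A) k" using set_pow_hom[OF f.group_hom_axioms Ac] ga(2) by blast
      moreover have "\<phi> ` A \<subseteq> V" using V'V A_def by auto
      ultimately have pa: "\<phi> a \<in> set_pow H V k" using set_pow_mono by blast
      have "g = a \<otimes>\<^bsub>G\<^esub> (inv\<^bsub>G\<^esub> a \<otimes>\<^bsub>G\<^esub> g)" using ac ga(1) by (simp add: G.m_assoc[symmetric])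
      then have "\<phi> g = \<phi> a \<otimes>\<^bsub>H\<^esub> \<phi> (inv\<^bsub>G\<^esub> a \<otimes>\<^bsub>G\<^esub> g)" using ac ga(1)
        by (metis G.inv_closed G.m_closed f.hom_mult)
      then have "\<phi> g \<in> set_pow H V (Suc k)" using pa b by (auto simp: set_mult_def)
      then show "y \<in> W" using V(3) ga(4) by blast
    qed
    show ?thesis
      using int img interior_of_subset[of X "metric_nbhd G d (set_pow G A k) \<epsilon>"]
      by (intro exI[of _ "X interior_of (metric_nbhd G d (set_pow G A k) \<epsilon>)"]) auto
  qed
  show ?thesis unfolding continuous_map_def
  proof (intro conjI allI impI)
    show "\<phi> \<in> topspace X \<rightarrow> topspace Y" using tX tY by auto
  next
    fix W assume W: "openin Y W"
    show "openin X {x \<in> topspace X. \<phi> x \<in> W}"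
    proof (subst openin_subopen, intro ballI)
      fix x assume x: "x \<in> {x \<in> topspace X. \<phi> x \<in> W}"
      then have xc: "x \<in> carrier G" using tX by auto
      let ?W = "{y \<in> topspace Y. \<phi> x \<otimes>\<^bsub>H\<^esub> y \<in> W}"
      have "openin Y ?W" using tg_lmult[OF assms(3), of "\<phi> x"] xc W openin_continuous_map_preimage by auto
      moreover have "\<one>\<^bsub>H\<^esub> \<in> ?W" using x xc tY by auto
      ultimately obtain U where U: "openin X U" "\<one>\<^bsub>G\<^esub> \<in> U" "\<phi> ` U \<subseteq> ?W" using at1 by blast
      let ?T = "{z \<in> topspace X. inv\<^bsub>G\<^esub> x \<otimes>\<^bsub>G\<^esub> z \<in> U}"
      have "openin X ?T" using tg_lmult[OF tgG, of "inv\<^bsub>G\<^esub> x"] xc U(1) openin_continuous_map_preimage by auto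
      moreover have "x \<in> ?T" using xc tX U(2) by auto
      moreover have "?T \<subseteq> {x \<in> topspace X. \<phi> x \<in> W}"
      proof
        fix z assume z: "z \<in> ?T"
        then have zc: "z \<in> carrier G" using tX by auto
        have "\<phi> x \<otimes>\<^bsub>H\<^esub> \<phi> (inv\<^bsub>G\<^esub> x \<otimes>\<^bsub>G\<^esub> z) \<in> W" using U(3) z by auto
        moreover have "\<phi> x \<otimes>\<^bsub>H\<^esub> \<phi> (inv\<^bsub>G\<^esub> x \<otimes>\<^bsub>G\<^esub> z) = \<phi> z"
          using xc zc by (metis G.inv_closed G.m_closed f.hom_mult G.m_assoc G.r_inv G.l_one)
        ultimately show "z \<in> {x \<in> topspace X. \<phi> x \<in> W}" using z by auto
      qed
      ultimately show "\<exists>T. openin X T \<and> x \<in> T \<and> T \<subseteq> {x \<in> topspace X. \<phi> x \<in> W}" by blast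
    qed
  qed
qed

end
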